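(* For every $s\in\mathbb{C}$ with $\mathrm{Re}(s)>1$, $$\sum_{n\geq1}\frac{\tau(n)\Omega(n)}{n^s}=2\zeta^2(s)P_\Omega(s),\qquad\text{where } P_\Omega(s)=\sum_p\frac{\Omega(p)}{p^s-1}=\sum_p\frac{1}{p^s-1}.$$
   Context: $\tau(n)$ is the number of positive divisors of $n$, $\Omega(n)$ is the number of prime factors of $n$ counted with multiplicity, $\zeta(s)=\sum_{n\geq1}n^{-s}$ is the Riemann zeta function, and sums over $p$ run over all primes. *)

theory Defs
  imports "HOL-Analysis.Analysis" "HOL-Computational_Algebra.Primes"
begin

definition tau :: "nat \<Rightarrow> nat" where
  "tau n = card {d. d dvd n}"

definition bigOmega :: "nat \<Rightarrow> nat" where
  "bigOmega n = size (prime_factorization n)"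

definition zeta_ser :: "complex \<Rightarrow> complex" where
  "zeta_ser s = (\<Sum>n. 1 / (of_nat (Suc n)) powr s)"

definition P_Omega :: "complex \<Rightarrow> complex" where
  "P_Omega s = (\<Sum>\<^sub>\<infinity>p\<in>{p::nat. prime p}. of_nat (bigOmega p) / ((of_nat p) powr s - 1))"

end

theory Submission
  imports Defs
begin


lemma has_sum_group:
  fixes F :: "'a \<Rightarrow> complex" and g :: "'a \<Rightarrow> 'b"
  assumes "(F has_sum S) A" and "g ` A \<subseteq> B"
    and "\<And>n. n \<in> B \<Longrightarrow> finite {x\<in>A. g x = n}"
  shows "((\<lambda>n. \<Sum>x\<in>{x\<in>A. g x = n}. F x) has_sum S) B"
proof -
  have bij: "bij_betw (\<lambda>x. (g x, x)) A (Sigma B (\<lambda>n. {x\<in>A. g x = n}))"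
    using assms(2) by (auto simp: bij_betw_def inj_on_def image_iff)
  have "((\<lambda>y. F (snd y)) has_sum S) (Sigma B (\<lambda>n. {x\<in>A. g x = n}))"
    using has_sum_reindex_bij_betw[OF bij, of "\<lambda>y. F (snd y)" S] assms(1) by simp
  then show ?thesis
    by (rule has_sum_Sigma') (use assms(3) in \<open>auto intro: has_sum_finiteI\<close>)
qed

lemma has_sum_prod_complex:
  fixes f :: "'a \<Rightarrow> complex" and g :: "'b \<Rightarrow> complex"
  assumes f: "(f has_sum a) A" and g: "(g has_sum b) B"
  shows "((\<lambda>(x,y). f x * g y) has_sum (a*b)) (A \<times> B)"
proof -
  have fa: "(\<lambda>x. norm (f x)) summable_on A" using f summable_on_iff_abs_summable_on_complex summable_on_def by blast
  have ga: "(\<lambda>x. norm (g x)) summable_on B" using g summable_on_iff_abs_summable_on_complex summable_on_def by blast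
  have "(\<lambda>z. norm ((\<lambda>(x,y). f x * g y) z)) summable_on (A \<times> B)"
  proof (rule Infinite_Sum.abs_summable_on_Sigma_iff[THEN iffD2], intro conjI ballI)
    fix x assume "x \<in> A"
    show "(\<lambda>y. norm (case (x, y) of (x, y) \<Rightarrow> f x * g y)) summable_on B"
      using summable_on_cmult_right[OF ga, of "norm (f x)"] by (simp add: norm_mult)
  next
    have "(\<lambda>x. norm (norm (f x) * (\<Sum>\<^sub>\<infinity>y\<in>B. norm (g y)))) summable_on A"
      using summable_on_cmult_left[OF fa, of "(\<Sum>\<^sub>\<infinity>y\<in>B. norm (g y))"]
      by (simp add: norm_mult infsum_nonneg)
    then show "(\<lambda>x. norm (\<Sum>\<^sub>\<infinity>y\<in>B. norm (case (x, y) of (x, y) \<Rightarrow> f x * g y))) summable_on A"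
      by (simp add: norm_mult infsum_cmult_right')
  qed
  then have sm: "(\<lambda>(x,y). f x * g y) summable_on (A \<times> B)"
    using summable_on_iff_abs_summable_on_complex by blast
  show ?thesis
  proof (rule has_sum_SigmaI[OF _ _ sm])
    show "((\<lambda>x. f x * b) has_sum a * b) A" using has_sum_cmult_left[OF f] by simp
    fix x assume "x \<in> A"
    show "((\<lambda>y. case (x, y) of (x, y) \<Rightarrow> f x * g y) has_sum f x * b) B"
      using has_sum_cmult_right[OF g] by simp
  qed
qed



definition ww :: "complex \<Rightarrow> nat \<Rightarrow> complex" where
  "ww s n = 1 / of_nat n powr s"

lemma ww_mult: "ww s (m * n) = ww s m * ww s n"
  unfolding ww_def by (simp add: powr_times_real)

lemma ww_1[simp]: "ww s 1 = 1" by (simp add: ww_def)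
lemma ww_0[simp]: "ww s 0 = 0" by (simp add: ww_def)

lemma ww_power: "ww s (p ^ k) = ww s p ^ k"
  proof (induction k)
  case (Suc k) then show ?case by (simp only: power_Suc ww_mult)
qed (simp add: ww_def)

lemma norm_ww: "norm (ww s n) = real n powr (- Re s)"
proof -
  have "norm (of_nat n powr s) = real n powr Re s"
    by (subst norm_powr_real_powr) auto
  then show ?thesis unfolding ww_def
    by (simp add: norm_divide powr_minus_divide)
qed

lemma summable_norm_ww: "Re s > 1 \<Longrightarrow> summable (\<lambda>n. norm (ww s n))"
  unfolding norm_ww by (subst summable_real_powr_iff) simp

lemma ww_has_sum_zeta:
  assumes "Re s > 1"
  shows "(ww s has_sum zeta_ser s) {0<..}"
proof -
  have sm: "summable (ww s)" using summable_norm_ww[OF assms] summable_norm_cancel by blast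
  have "(\<lambda>n. ww s (Suc n)) sums zeta_ser s"
    unfolding zeta_ser_def using sm summable_Suc_iff[of "ww s"]
    by (simp add: ww_def summable_sums)
  then have "ww s sums zeta_ser s" using sums_Suc_iff[of "ww s"] by simp
  then have "(ww s has_sum zeta_ser s) UNIV"
    by (rule norm_summable_imp_has_sum[OF summable_norm_ww[OF assms]])
  then show ?thesis
    by (rule has_sum_cong_neutral[THEN iffD1, rotated -1]) auto
qed



lemma bigOmega_card:
  fixes m :: nat
  assumes "m > 0"
  shows "finite {z \<in> Sigma {p. prime p} (\<lambda>_. {0<..}) \<times> {0<..}. fst (fst z) ^ snd (fst z) * snd z = m}"
    and "card {z \<in> Sigma {p. prime p} (\<lambda>_. {0<..}) \<times> {0<..}. fst (fst z) ^ snd (fst z) * snd z = m} = bigOmega m"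
proof -
  let ?F = "{z \<in> Sigma {p. prime p} (\<lambda>_. {0<..}) \<times> {0<..}. fst (fst z) ^ snd (fst z) * snd z = m}"
  let ?S = "Sigma (prime_factors m) (\<lambda>p. {1..multiplicity p m})"
  have bij: "bij_betw fst ?F ?S"
  proof (rule bij_betwI[where g = "\<lambda>(p,k). ((p,k), m div p ^ k)"])
    show "fst \<in> ?F \<rightarrow> ?S"
    proof
      fix z assume z: "z \<in> ?F"
      obtain p k c where zz: "z = ((p,k),c)" by (metis prod.collapse)
      have pk: "prime p" "k > 0" "c > 0" "p ^ k * c = m" using z zz by auto
      then have "p ^ k dvd m" by auto
      then have "k \<le> multiplicity p m" using power_dvd_iff_le_multiplicity[of m p k] assms not_prime_unit[of p] pk(1) prime_gt_1_nat[OF pk(1)] by simp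
      moreover have "p dvd m" using dvd_trans[OF dvd_power[of k p] \<open>p ^ k dvd m\<close>] pk(2) by simp
      then have "p \<in> prime_factors m"
        using pk assms by (simp add: in_prime_factors_iff)
      ultimately show "fst z \<in> ?S" using zz pk by auto
    qed
    show "(\<lambda>(p,k). ((p,k), m div p ^ k)) \<in> ?S \<rightarrow> ?F"
    proof
      fix y assume y: "y \<in> ?S"
      obtain p k where yy: "y = (p,k)" by (metis prod.collapse)
      have p: "prime p" "k \<ge> 1" "k \<le> multiplicity p m" using y yy by (auto simp: in_prime_factors_iff)
      then have d: "p ^ k dvd m" using power_dvd_iff_le_multiplicity[of m p k] assms not_prime_unit[of p] p(1) prime_gt_1_nat[OF p(1)] by simp
      have "m div p ^ k > 0" using d assms
        by (metis dvd_div_mult_self mult_0 neq0_conv)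
      then show "(\<lambda>(p,k). ((p,k), m div p ^ k)) y \<in> ?F"
        using yy p d by (simp add: dvd_div_mult_self)
    qed
    show "(\<lambda>(p,k). ((p,k), m div p ^ k)) (fst z) = z" if "z \<in> ?F" for z
    proof -
      obtain p k c where zz: "z = ((p,k),c)" by (metis prod.collapse)
      have pk: "prime p" "p ^ k * c = m" using that zz by auto
      then have "p ^ k > 0" by (simp add: prime_gt_0_nat)
      then have "m div p ^ k = c" using pk(2) by (metis nonzero_mult_div_cancel_left not_gr0)
      then show ?thesis using zz by simp
    qed
    show "fst ((\<lambda>(p,k). ((p,k), m div p ^ k)) y) = y" if "y \<in> ?S" for y
      by (auto split: prod.splits)
  qed
  have fS: "finite ?S" by auto
  show "finite ?F" using bij fS bij_betw_finite by blast
  have "card ?F = card ?S" using bij bij_betw_same_card by blast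
  also have "\<dots> = (\<Sum>p\<in>prime_factors m. multiplicity p m)"
    by (simp add: card_SigmaI)
  also have "\<dots> = bigOmega m"
    unfolding bigOmega_def size_multiset_overloaded_eq
    by (intro sum.cong) (auto simp: count_prime_factorization)
  finally show "card ?F = bigOmega m" .
qed



lemma geom_prime:
  assumes p: "prime p" and s: "Re s > 1"
  shows "((\<lambda>k. ww s (p ^ k)) has_sum (1 / (of_nat p powr s - 1))) {0<..}"
proof -
  define c where "c = ww s p"
  have p2: "real p \<ge> 2" using prime_ge_2_nat[OF p] by simp
  have nc: "norm c < 1" unfolding c_def norm_ww
  proof -
    have "real p powr (- Re s) < real p powr 0"
      using p2 s by (intro powr_less_mono) auto
    then show "real p powr (- Re s) < 1" using p2 by simp
  qed
  have "(\<lambda>n. c * c ^ n) sums (c * (1 / (1 - c)))"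
    by (rule sums_mult[OF geometric_sums[OF nc]])
  moreover have "c * (1 / (1 - c)) = 1 / (of_nat p powr s - 1)"
  proof -
    have P0: "(of_nat p :: complex) powr s \<noteq> 0" using p2 by simp
    have c1: "c \<noteq> 1" using nc by auto
    then have "of_nat p powr s \<noteq> (1::complex)" unfolding c_def ww_def by auto
    then show ?thesis unfolding c_def ww_def using P0
      by (simp add: field_simps)
  qed
  ultimately have sm: "(\<lambda>n. c ^ Suc n) sums (1 / (of_nat p powr s - 1))" by simp
  have "summable (\<lambda>n. norm c ^ Suc n)"
    using summable_geometric[of "norm c"] nc summable_Suc_iff[of "\<lambda>n. norm c ^ n"] by simp
  then have sn: "summable (\<lambda>n. norm (c ^ Suc n))" by (simp only: norm_power)
  have "((\<lambda>n. c ^ Suc n) has_sum (1 / (of_nat p powr s - 1))) UNIV"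
    by (rule norm_summable_imp_has_sum[OF sn sm])
  moreover have "bij_betw Suc UNIV {0<..}"
    by (rule bij_betwI[where g = "\<lambda>n. n - 1"]) auto
  ultimately show ?thesis
    using has_sum_reindex_bij_betw[of Suc UNIV "{0<..}" "\<lambda>k. ww s (p ^ k)"]
    by (simp add: ww_power ww_mult c_def)
qed

definition Pp :: "complex \<Rightarrow> complex" where
  "Pp s = (\<Sum>\<^sub>\<infinity>p\<in>{p::nat. prime p}. 1 / ((of_nat p) powr s - 1))"

lemma G_has_sum:
  assumes s: "Re s > 1"
  shows "((\<lambda>(p,k). ww s (p ^ k)) has_sum Pp s) (Sigma {p. prime p} (\<lambda>_. {0<..}))"
proof -
  let ?T = "Sigma {p::nat. prime p} (\<lambda>_. {0::nat<..})"
  have inj: "inj_on (\<lambda>(p,k). p ^ k) ?T"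
    by (auto simp: inj_on_def dest: prime_power_inj')
  have sub: "(\<lambda>(p,k). p ^ k) ` ?T \<subseteq> {0<..}" by (auto simp: prime_gt_0_nat)
  have "ww s summable_on {0<..}" using ww_has_sum_zeta[OF s] summable_on_def by blast
  then have "ww s summable_on ((\<lambda>(p,k). p ^ k) ` ?T)"
    by (rule summable_on_subset_banach[OF _ sub])
  then have "(ww s \<circ> (\<lambda>(p,k). p ^ k)) summable_on ?T"
    using summable_on_reindex[OF inj] by blast
  then have sT: "(\<lambda>(p,k). ww s (p ^ k)) summable_on ?T"
    by (simp add: o_def case_prod_unfold)
  then have hT: "((\<lambda>(p,k). ww s (p ^ k)) has_sum infsum (\<lambda>(p,k). ww s (p ^ k)) ?T) ?T"
    by (rule has_sum_infsum)
  have "((\<lambda>p. 1 / ((of_nat p) powr s - 1)) has_sum infsum (\<lambda>(p,k). ww s (p ^ k)) ?T) {p. prime p}"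
    by (rule has_sum_Sigma'[OF hT]) (use geom_prime[OF _ s] in auto)
  then have "Pp s = infsum (\<lambda>(p,k). ww s (p ^ k)) ?T"
    unfolding Pp_def by (rule infsumI)
  then show ?thesis using hT by simp
qed

lemma omega_series:
  assumes s: "Re s > 1"
  shows "((\<lambda>m. of_nat (bigOmega m) * ww s m) has_sum (Pp s * zeta_ser s)) {0<..}"
proof -
  let ?T = "Sigma {p::nat. prime p} (\<lambda>_. {0::nat<..}) \<times> {0::nat<..}"
  have "((\<lambda>(x,c). (\<lambda>(p,k). ww s (p ^ k)) x * ww s c) has_sum (Pp s * zeta_ser s)) ?T"
    by (rule has_sum_prod_complex[OF G_has_sum[OF s] ww_has_sum_zeta[OF s]])
  then have h: "((\<lambda>z. ww s (fst (fst z) ^ snd (fst z) * snd z)) has_sum (Pp s * zeta_ser s)) ?T"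
    by (simp add: case_prod_unfold ww_mult)
  have "((\<lambda>m. \<Sum>z\<in>{z\<in>?T. fst (fst z) ^ snd (fst z) * snd z = m}. ww s (fst (fst z) ^ snd (fst z) * snd z))
        has_sum (Pp s * zeta_ser s)) {0<..}"
    by (rule has_sum_group[OF h]) (auto simp: bigOmega_card prime_gt_0_nat)
  then show ?thesis
  proof (rule has_sum_cong[THEN iffD1, rotated])
    fix m :: nat assume "m \<in> {0<..}"
    then have m: "m > 0" by simp
    have "(\<Sum>z\<in>{z\<in>?T. fst (fst z) ^ snd (fst z) * snd z = m}. ww s (fst (fst z) ^ snd (fst z) * snd z))
        = (\<Sum>z\<in>{z\<in>?T. fst (fst z) ^ snd (fst z) * snd z = m}. ww s m)"
      by (intro sum.cong) auto
    also have "\<dots> = of_nat (bigOmega m) * ww s m"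
      using bigOmega_card(2)[OF m] by simp
    finally show "(\<Sum>z\<in>{z\<in>?T. fst (fst z) ^ snd (fst z) * snd z = m}. ww s (fst (fst z) ^ snd (fst z) * snd z))
        = of_nat (bigOmega m) * ww s m" .
  qed
qed



lemma tau_card:
  fixes n :: nat
  assumes n: "n > 0"
  shows "finite {z \<in> {0::nat<..} \<times> {0::nat<..}. fst z * snd z = n}"
    and "card {z \<in> {0::nat<..} \<times> {0::nat<..}. fst z * snd z = n} = tau n"
proof -
  let ?F = "{z \<in> {0::nat<..} \<times> {0::nat<..}. fst z * snd z = n}"
  have bij: "bij_betw fst ?F {d. d dvd n}"
  proof (rule bij_betwI[where g = "\<lambda>d. (d, n div d)"])
    show "fst \<in> ?F \<rightarrow> {d. d dvd n}" by auto
    show "(\<lambda>d. (d, n div d)) \<in> {d. d dvd n} \<rightarrow> ?F"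
      using n by (auto simp: dvd_div_mult_self intro!: Nat.gr0I dest: dvd_imp_le)
    show "(fst z, n div fst z) = z" if "z \<in> ?F" for z
      using that by (auto simp: prod_eq_iff)
    show "fst (y, n div y) = y" for y by simp
  qed
  have fin: "finite {d. d dvd n}" using n by simp
  show "finite ?F" using bij fin bij_betw_finite by blast
  show "card ?F = tau n" unfolding tau_def using bij bij_betw_same_card by blast
qed

lemma bigOmega_mult:
  fixes a b :: nat
  assumes "a > 0" "b > 0"
  shows "bigOmega (a * b) = bigOmega a + bigOmega b"
  unfolding bigOmega_def using assms by (simp add: prime_factorization_mult)

lemma main_series:
  assumes s: "Re s > 1"
  shows "((\<lambda>n. of_nat (tau n * bigOmega n) * ww s n) has_sum (2 * (zeta_ser s)\<^sup>2 * Pp s)) {0<..}"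
proof -
  let ?A = "{0::nat<..} \<times> {0::nat<..}"
  have h1: "((\<lambda>(a,b). (of_nat (bigOmega a) * ww s a) * ww s b) has_sum (Pp s * zeta_ser s * zeta_ser s)) ?A"
    by (rule has_sum_prod_complex[OF omega_series[OF s] ww_has_sum_zeta[OF s]])
  have h2: "((\<lambda>(a,b). ww s a * (of_nat (bigOmega b) * ww s b)) has_sum (zeta_ser s * (Pp s * zeta_ser s))) ?A"
    by (rule has_sum_prod_complex[OF ww_has_sum_zeta[OF s] omega_series[OF s]])
  have "((\<lambda>z. (\<lambda>(a,b). (of_nat (bigOmega a) * ww s a) * ww s b) z + (\<lambda>(a,b). ww s a * (of_nat (bigOmega b) * ww s b)) z)
     has_sum (Pp s * zeta_ser s * zeta_ser s + zeta_ser s * (Pp s * zeta_ser s))) ?A"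
    by (rule has_sum_add[OF h1 h2])
  moreover have "Pp s * zeta_ser s * zeta_ser s + zeta_ser s * (Pp s * zeta_ser s) = 2 * (zeta_ser s)\<^sup>2 * Pp s"
    by (simp add: power2_eq_square algebra_simps)
  ultimately have "((\<lambda>z. (\<lambda>(a,b). (of_nat (bigOmega a) * ww s a) * ww s b) z + (\<lambda>(a,b). ww s a * (of_nat (bigOmega b) * ww s b)) z)
     has_sum (2 * (zeta_ser s)\<^sup>2 * Pp s)) ?A" by simp
  then have h: "((\<lambda>z. of_nat (bigOmega (fst z * snd z)) * ww s (fst z * snd z)) has_sum (2 * (zeta_ser s)\<^sup>2 * Pp s)) ?A"
  proof (rule has_sum_cong[THEN iffD1, rotated])
    fix z assume "z \<in> ?A"
    then obtain a b where z: "z = (a,b)" "a > 0" "b > 0" by auto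
    show "(\<lambda>z. (\<lambda>(a,b). (of_nat (bigOmega a) * ww s a) * ww s b) z + (\<lambda>(a,b). ww s a * (of_nat (bigOmega b) * ww s b)) z) z
        = of_nat (bigOmega (fst z * snd z)) * ww s (fst z * snd z)"
      using z by (simp add: bigOmega_mult ww_mult algebra_simps)
  qed
  have "((\<lambda>n. \<Sum>z\<in>{z\<in>?A. fst z * snd z = n}. of_nat (bigOmega (fst z * snd z)) * ww s (fst z * snd z))
        has_sum (2 * (zeta_ser s)\<^sup>2 * Pp s)) {0<..}"
    by (rule has_sum_group[OF h]) (auto simp: tau_card)
  then show ?thesis
  proof (rule has_sum_cong[THEN iffD1, rotated])
    fix n :: nat assume "n \<in> {0<..}"
    then have n: "n > 0" by simp
    have "(\<Sum>z\<in>{z\<in>?A. fst z * snd z = n}. of_nat (bigOmega (fst z * snd z)) * ww s (fst z * snd z))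
        = (\<Sum>z\<in>{z\<in>?A. fst z * snd z = n}. of_nat (bigOmega n) * ww s n)"
      by (intro sum.cong) auto
    also have "\<dots> = of_nat (tau n * bigOmega n) * ww s n"
      using tau_card(2)[OF n] by simp
    finally show "(\<Sum>z\<in>{z\<in>?A. fst z * snd z = n}. of_nat (bigOmega (fst z * snd z)) * ww s (fst z * snd z))
        = of_nat (tau n * bigOmega n) * ww s n" .
  qed
qed

theorem theorem4p1:
  fixes s :: complex
  assumes "Re s > 1"
  shows "(\<lambda>n. of_nat (tau (Suc n) * bigOmega (Suc n)) / (of_nat (Suc n)) powr s)
           sums (2 * (zeta_ser s)\<^sup>2 * P_Omega s)
         \<and> P_Omega s = (\<Sum>\<^sub>\<infinity>p\<in>{p::nat. prime p}. 1 / ((of_nat p) powr s - 1))"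
proof -
  have PO: "P_Omega s = Pp s"
    unfolding P_Omega_def Pp_def
    by (intro infsum_cong) (simp add: bigOmega_def prime_factorization_prime)
  have bij: "bij_betw Suc UNIV {0<..}"
    by (rule bij_betwI[where g = "\<lambda>n. n - 1"]) auto
  have "((\<lambda>n. of_nat (tau (Suc n) * bigOmega (Suc n)) * ww s (Suc n)) has_sum (2 * (zeta_ser s)\<^sup>2 * Pp s)) UNIV"
    using has_sum_reindex_bij_betw[OF bij, of "\<lambda>n. of_nat (tau n * bigOmega n) * ww s n"] main_series[OF assms]
    by simp
  then have "(\<lambda>n. of_nat (tau (Suc n) * bigOmega (Suc n)) * ww s (Suc n)) sums (2 * (zeta_ser s)\<^sup>2 * Pp s)"
    by (rule has_sum_imp_sums)
  then have "(\<lambda>n. of_nat (tau (Suc n) * bigOmega (Suc n)) / (of_nat (Suc n)) powr s)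
           sums (2 * (zeta_ser s)\<^sup>2 * P_Omega s)"
    unfolding PO ww_def by simp
  then show ?thesis using PO unfolding Pp_def by simp
qed


end
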